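(* Let $\lambda>0$ be a random variable with density $\pi(\lambda)$ on $(0,\infty)$, and let $\beta\mid\lambda\sim\mathcal{N}(0,\lambda)$ (variance $\lambda$), so that $\beta$ has marginal density $\pi(\beta)=\int_0^\infty \pi(\beta\mid\lambda)\pi(\lambda)\,d\lambda$. Then $\pi(\beta)$ is heavy-tailed if and only if $\pi(\lambda)$ is heavy-tailed.
   Context: A density $f$ (on $\mathbb{R}$, or on $(0,\infty)$ extended by zero) is heavy-tailed if $\int f(x)e^{tx}\,dx=\infty$ for all $t>0$. *)

theory Defs
  imports "HOL-Probability.Probability"
begin

definition heavy_tailed :: "(real \<Rightarrow> ennreal) \<Rightarrow> bool" where
  "heavy_tailed f \<longleftrightarrow> (\<forall>t::real>0. (\<integral>\<^sup>+ x. f x * ennreal (exp (t * x)) \<partial>lborel) = \<infinity>)"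

text \<open>Marginal density of beta when beta given lambda is N(0, lambda) (variance lambda)
  and lambda has density p on (0, infinity).\<close>
definition scale_mixture_density :: "(real \<Rightarrow> real) \<Rightarrow> real \<Rightarrow> ennreal" where
  "scale_mixture_density p b =
     (\<integral>\<^sup>+ l. indicator {0<..} l * ennreal (normal_density 0 (sqrt l) b * p l) \<partial>lborel)"

end

theory Submission
  imports Defs
begin

lemma nd_shift:
  assumes "\<sigma> > 0"
  shows "normal_density 0 \<sigma> x * exp (t * x) = exp (t^2 * \<sigma>^2 / 2) * normal_density (t * \<sigma>^2) \<sigma> x"
proof -
  have s: "\<sigma>^2 \<noteq> 0" using assms by simp
  have sq: "(x - t * \<sigma>^2)^2 = x^2 - 2 * \<sigma>^2 * (t * x) + \<sigma>^2 * (t^2 * \<sigma>^2)"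
    by (simp add: power2_eq_square algebra_simps)
  have "-(x - t * \<sigma>^2)\<^sup>2 / (2 * \<sigma>^2) = -(x^2) / (2 * \<sigma>^2) + (2 * \<sigma>^2 * (t * x)) / (2 * \<sigma>^2) - (\<sigma>^2 * (t^2 * \<sigma>^2)) / (2 * \<sigma>^2)"
    unfolding sq by (simp add: diff_divide_distrib add_divide_distrib)
  also have "\<dots> = -(x^2) / (2 * \<sigma>^2) + t * x - t^2 * \<sigma>^2 / 2"
    using s by simp
  finally have e: "-(x - 0)\<^sup>2 / (2 * \<sigma>^2) + t * x = t^2 * \<sigma>^2 / 2 + (-(x - t * \<sigma>^2)\<^sup>2 / (2 * \<sigma>^2))"
    by simp
  have "normal_density 0 \<sigma> x * exp (t * x) = 1 / sqrt (2 * pi * \<sigma>^2) * (exp (-(x - 0)\<^sup>2 / (2 * \<sigma>^2)) * exp (t * x))"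
    unfolding normal_density_def by (simp only: mult.assoc)
  also have "\<dots> = 1 / sqrt (2 * pi * \<sigma>^2) * exp (-(x - 0)\<^sup>2 / (2 * \<sigma>^2) + t * x)"
    by (simp only: exp_add)
  also have "\<dots> = 1 / sqrt (2 * pi * \<sigma>^2) * exp (t^2 * \<sigma>^2 / 2 + (-(x - t * \<sigma>^2)\<^sup>2 / (2 * \<sigma>^2)))"
    by (simp only: e)
  also have "\<dots> = exp (t^2 * \<sigma>^2 / 2) * normal_density (t * \<sigma>^2) \<sigma> x"
    unfolding normal_density_def exp_add by (simp only: mult_ac)
  finally show ?thesis .
qed
lemma nd_mgf:
  assumes "\<sigma> > 0"
  shows "(\<integral>\<^sup>+ x. ennreal (normal_density 0 \<sigma> x) * ennreal (exp (t * x)) \<partial>lborel) = ennreal (exp (t^2 * \<sigma>^2 / 2))"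
proof -
  have "(\<integral>\<^sup>+ x. ennreal (normal_density 0 \<sigma> x) * ennreal (exp (t * x)) \<partial>lborel)
      = (\<integral>\<^sup>+ x. ennreal (exp (t^2 * \<sigma>^2 / 2)) * ennreal (normal_density (t * \<sigma>^2) \<sigma> x) \<partial>lborel)"
    by (intro nn_integral_cong) (simp add: nd_shift[OF assms] ennreal_mult[symmetric])
  also have "\<dots> = ennreal (exp (t^2 * \<sigma>^2 / 2)) * (\<integral>\<^sup>+ x. ennreal (normal_density (t * \<sigma>^2) \<sigma> x) \<partial>lborel)"
    by (rule nn_integral_cmult) simp
  also have "(\<integral>\<^sup>+ x. ennreal (normal_density (t * \<sigma>^2) \<sigma> x) \<partial>lborel) = 1"
  proof -
    have "(\<integral>\<^sup>+ x. ennreal (normal_density (t * \<sigma>^2) \<sigma> x) \<partial>lborel)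
        = ennreal (\<integral> x. normal_density (t * \<sigma>^2) \<sigma> x \<partial>lborel)"
      by (rule nn_integral_eq_integral[OF integrable_normal_density[OF assms]]) simp
    then show ?thesis by (simp only: integral_normal_density[OF assms] ennreal_1)
  qed
  finally show ?thesis by simp
qed

lemma fub_aux:
  fixes p :: "real \<Rightarrow> real" and t :: real
  assumes meas[measurable]: "p \<in> borel_measurable borel"
  shows "(\<integral>\<^sup>+ b. (\<integral>\<^sup>+ l. indicator {0<..} l * ennreal (normal_density 0 (sqrt l) b * p l) * ennreal (exp (t * b)) \<partial>lborel) \<partial>lborel)
       = (\<integral>\<^sup>+ l. (\<integral>\<^sup>+ b. indicator {0<..} l * ennreal (normal_density 0 (sqrt l) b * p l) * ennreal (exp (t * b)) \<partial>lborel) \<partial>lborel)"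
proof -
  have sb: "sets (lborel \<Otimes>\<^sub>M lborel) = sets (borel \<Otimes>\<^sub>M borel)"
    by (intro sets_pair_measure_cong) simp_all
  have "(\<lambda>(l, b). indicator {0<..} l * ennreal (normal_density 0 (sqrt l) b * p l) * ennreal (exp (t * b))) \<in> borel_measurable (borel \<Otimes>\<^sub>M borel)"
    unfolding normal_density_def by measurable
  then have "(\<lambda>(l, b). indicator {0<..} l * ennreal (normal_density 0 (sqrt l) b * p l) * ennreal (exp (t * b))) \<in> borel_measurable (lborel \<Otimes>\<^sub>M lborel)"
    using measurable_cong_sets[OF sb refl] by simp
  then show ?thesis
    by (rule lborel_pair.Fubini'[where f="\<lambda>l b. indicator {0<..} l * ennreal (normal_density 0 (sqrt l) b * p l) * ennreal (exp (t * b))"])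
qed

theorem lemma1:
  fixes p :: "real \<Rightarrow> real"
  assumes meas: "p \<in> borel_measurable borel"
    and nonneg: "\<And>l. p l \<ge> 0"
    and supp: "\<And>l. l \<le> 0 \<Longrightarrow> p l = 0"
    and prob: "(\<integral>\<^sup>+ l. ennreal (p l) \<partial>lborel) = 1"
  shows "heavy_tailed (scale_mixture_density p) \<longleftrightarrow> heavy_tailed (\<lambda>l. ennreal (p l))"
proof -
  define G where "G s = (\<integral>\<^sup>+ l. ennreal (p l) * ennreal (exp (s * l)) \<partial>lborel)" for s
  have key: "(\<integral>\<^sup>+ b. scale_mixture_density p b * ennreal (exp (t * b)) \<partial>lborel) = G (t^2/2)" for t
  proof -
    have "(\<integral>\<^sup>+ b. scale_mixture_density p b * ennreal (exp (t * b)) \<partial>lborel)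
        = (\<integral>\<^sup>+ b. (\<integral>\<^sup>+ l. indicator {0<..} l * ennreal (normal_density 0 (sqrt l) b * p l) * ennreal (exp (t * b)) \<partial>lborel) \<partial>lborel)"
      unfolding scale_mixture_density_def
      proof (intro nn_integral_cong)
        fix b :: real
        have m: "(\<lambda>l. indicator {0<..} l * ennreal (normal_density 0 (sqrt l) b * p l)) \<in> borel_measurable lborel"
          using meas unfolding normal_density_def by (simp add: measurable_lborel1)
        show "(\<integral>\<^sup>+ l. indicator {0<..} l * ennreal (normal_density 0 (sqrt l) b * p l) \<partial>lborel) * ennreal (exp (t * b)) = (\<integral>\<^sup>+ l. indicator {0<..} l * ennreal (normal_density 0 (sqrt l) b * p l) * ennreal (exp (t * b)) \<partial>lborel)"
          by (rule nn_integral_multc[OF m, symmetric])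
      qed
    also have "\<dots> = (\<integral>\<^sup>+ l. (\<integral>\<^sup>+ b. indicator {0<..} l * ennreal (normal_density 0 (sqrt l) b * p l) * ennreal (exp (t * b)) \<partial>lborel) \<partial>lborel)"
      by (rule fub_aux[OF meas, of t])
    also have "\<dots> = (\<integral>\<^sup>+ l. ennreal (p l) * ennreal (exp (t^2/2 * l)) \<partial>lborel)"
    proof (intro nn_integral_cong)
      fix l :: real
      show "(\<integral>\<^sup>+ b. indicator {0<..} l * ennreal (normal_density 0 (sqrt l) b * p l) * ennreal (exp (t * b)) \<partial>lborel) = ennreal (p l) * ennreal (exp (t^2/2 * l))"
      proof (cases "l > 0")
        case True
        have "(\<integral>\<^sup>+ b. indicator {0<..} l * ennreal (normal_density 0 (sqrt l) b * p l) * ennreal (exp (t * b)) \<partial>lborel)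
            = (\<integral>\<^sup>+ b. ennreal (p l) * (ennreal (normal_density 0 (sqrt l) b) * ennreal (exp (t * b))) \<partial>lborel)"
          using True nonneg[of l] by (intro nn_integral_cong) (simp add: ennreal_mult' mult_ac)
        also have "\<dots> = ennreal (p l) * (\<integral>\<^sup>+ b. ennreal (normal_density 0 (sqrt l) b) * ennreal (exp (t * b)) \<partial>lborel)"
          by (rule nn_integral_cmult) simp
        also have "\<dots> = ennreal (p l) * ennreal (exp (t^2/2 * l))"
          using True by (simp add: nd_mgf)
        finally show ?thesis .
      next
        case False
        then show ?thesis using supp[of l] by simp
      qed
    qed
    finally show ?thesis unfolding G_def .
  qed
  have "heavy_tailed (scale_mixture_density p) \<longleftrightarrow> (\<forall>t::real>0. G (t^2/2) = \<infinity>)"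
    unfolding heavy_tailed_def key by (rule refl)
  also have "\<dots> \<longleftrightarrow> (\<forall>s::real>0. G s = \<infinity>)"
  proof
    assume H: "\<forall>t::real>0. G (t^2/2) = \<infinity>"
    show "\<forall>s::real>0. G s = \<infinity>"
    proof (intro allI impI)
      fix s :: real assume "s > 0"
      define u where "u = sqrt (2 * s)"
      have u1: "u > 0" unfolding u_def using \<open>s > 0\<close> by simp
      have u2: "u ^ 2 / 2 = s" unfolding u_def using \<open>s > 0\<close> by simp
      have "G (u ^ 2 / 2) = \<infinity>" using H u1 by blast
      then show "G s = \<infinity>" using u2 by simp
    qed
  next
    assume H: "\<forall>s::real>0. G s = \<infinity>"
    show "\<forall>t::real>0. G (t^2/2) = \<infinity>"
    proof (intro allI impI)
      fix t :: real assume "t > 0"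
      then have "t ^ 2 / 2 > 0" by simp
      then show "G (t ^ 2 / 2) = \<infinity>" using H by blast
    qed
  qed
  also have "\<dots> \<longleftrightarrow> heavy_tailed (\<lambda>l. ennreal (p l))"
    unfolding heavy_tailed_def G_def ..
  finally show ?thesis .
qed

end
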